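(* Let $n\ge m\ge 2$ and let $\bm L\in\mathbb{R}^{m\times m}$ be the lower triangular matrix \[ L_{ij}=\begin{cases}\sqrt{\dfrac{m-i}{m-i+1}}, & i=j<m,\\[1ex] -\dfrac{1}{\sqrt{(m-j+1)(m-j)}}, & 1\le j<i\le m,\\[1ex] 0, & \text{otherwise}.\end{cases} \] Then \[ \widetilde{\mathcal O}_{m,n}=\left\{\bm L\bm Q+\frac{1}{\sqrt{mn}}\bm J_{m\times n}\ :\ \bm Q\in\mathbb{R}^{m\times n},\ \bm Q\bm Q^T=\bm I_m,\ \bm Q^T\bm e_m=\bm\xi_n\right\}, \] i.e. the set of matrices of this form where $\bm Q$ has orthonormal rows and last row equal to $\bm\xi_n^T$.
   Context: $\bm 1_k$ denotes the all-ones vector in $\mathbb{R}^k$, $\bm\xi_k=\frac{1}{\sqrt k}\bm 1_k$, $\bm J_{m\times n}$ is the $m\times n$ all-ones matrix, and $\bm e_m$ is the $m$-th standard basis vector of $\mathbb{R}^m$. $\widetilde{\mathcal O}_{m,n}:=\{\bm W\in\mathbb{R}^{m\times n}: \bm W\bm W^T=\bm I_m,\ \bm\xi_m^T\bm W\bm\xi_n=1\}$ (the set of semi-orthogonal $m\times n$ matrices maximizing the sum of all entries). The matrix $\bm L$ is the Cholesky factor of $\bm I_m-\frac1m\bm J_m$. *)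

theory Defs
  imports Complex_Main "Jordan_Normal_Form.Matrix"
begin

text \<open>Matrices are Jordan_Normal_Form matrices with 0-based indices.
  Paper index i (1..m) corresponds to index i-1 here.\<close>

definition xi_vec :: "nat \<Rightarrow> real vec" where
  "xi_vec k = vec k (\<lambda>_. 1 / sqrt (real k))"

definition J_mat :: "nat \<Rightarrow> nat \<Rightarrow> real mat" where
  "J_mat m n = mat m n (\<lambda>_. 1)"

definition O_tilde :: "nat \<Rightarrow> nat \<Rightarrow> real mat set" where
  "O_tilde m n = {W. W \<in> carrier_mat m n \<and> W * transpose_mat W = 1\<^sub>m m
      \<and> xi_vec m \<bullet> (W *\<^sub>v xi_vec n) = 1}"

definition L_mat :: "nat \<Rightarrow> real mat" where
  "L_mat m = mat m m (\<lambda>(i, j).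
      if i = j \<and> i + 1 < m then sqrt ((real m - real i - 1) / (real m - real i))
      else if j < i then - 1 / sqrt ((real m - real j) * (real m - real j - 1))
      else 0)"

end

theory Submission
  imports Defs "Jordan_Normal_Form.Determinant"
begin

lemma tele: "i \<le> m - 1 \<Longrightarrow> 2 \<le> m \<Longrightarrow> (\<Sum>j<i. 1 / ((real m - real j) * (real m - real j - 1))) = 1/(real m - real i) - 1 / real m"
proof (induction i)
  case 0 then show ?case by simp
next
  case (Suc i)
  define y where "y = real m - real i - 1"
  have a: "y > 0" using Suc.prems by (auto simp: y_def)
  have e: "real m - real i = y + 1" "real m - real (Suc i) = y" by (auto simp: y_def)
  have k: "1/(y+1) + 1 / ((y+1) * y) = 1 / y"
  proof -
    have "y \<noteq> 0" "y + 1 \<noteq> 0" using a by auto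
    then have "1/((y+1)*y) = 1/y - 1/(y+1)" by (simp add: divide_simps)
    then show ?thesis by simp
  qed
  have "(\<Sum>j<Suc i. 1 / ((real m - real j) * (real m - real j - 1))) = 1/(real m - real i) - 1 / real m + 1 / ((real m - real i) * (real m - real i - 1))"
    using Suc by simp
  also have "\<dots> = 1/(y+1) - 1 / real m + 1 / ((y+1) * y)" unfolding e by simp
  also have "\<dots> = 1/y - 1/real m" using k by linarith
  finally show ?case unfolding e .
qed

lemma sq1: "p > 0 \<Longrightarrow> (-1 / sqrt p) * (-1 / sqrt (p::real)) = 1/p"
proof -
  assume "p > 0"
  have "(-1 / sqrt p) * (-1 / sqrt (p::real)) = 1/(sqrt p * sqrt p)" by simp
  also have "sqrt p * sqrt p = p" using \<open>p>0\<close> by simp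
  finally show ?thesis .
qed

lemma sq2: "(a::real) > 0 \<Longrightarrow> b > 0 \<Longrightarrow> sqrt (b/a) * (-1 / sqrt (a*b)) = - 1/a"
proof -
  assume a: "a > 0" "b > 0"
  have "sqrt (b/a) * (1 / sqrt (a*b)) = sqrt (b/a) / sqrt (a*b)" by simp
  also have "\<dots> = sqrt (b/a / (a*b))" by (simp only: real_sqrt_divide)
  also have "b/a/(a*b) = (1/a)^2" using a by (simp add: field_simps power2_eq_square)
  also have "sqrt ((1/a)^2) = 1/a" using a by simp
  finally show ?thesis by simp
qed

definition aa :: "nat \<Rightarrow> nat \<Rightarrow> nat \<Rightarrow> real" where
  "aa m i j = (if j = m - 1 then 1 / sqrt (real m) else if i = j then sqrt ((real m - real i - 1) / (real m - real i))
     else if j < i then - 1 / sqrt ((real m - real j) * (real m - real j - 1)) else 0)"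

definition A_mat :: "nat \<Rightarrow> real mat" where
  "A_mat m = mat m m (\<lambda>(i, j). if j = m - 1 then 1 / sqrt (real m) else L_mat m $$ (i, j))"

lemma A_mat_carrier: "A_mat m \<in> carrier_mat m m" by (simp add: A_mat_def)

lemma A_entry: "i < m \<Longrightarrow> j < m \<Longrightarrow> A_mat m $$ (i, j) = aa m i j"
  by (auto simp: A_mat_def L_mat_def aa_def)

lemma L_entry_last: "i < m \<Longrightarrow> L_mat m $$ (i, m - 1) = 0"
  by (auto simp: L_mat_def)

lemma L_entry: "i < m \<Longrightarrow> j < m - 1 \<Longrightarrow> L_mat m $$ (i, j) = aa m i j"
  by (auto simp: L_mat_def aa_def)

lemma aa_sum: assumes m: "2 \<le> m" and ik: "i \<le> k" "k < m"
  shows "(\<Sum>j<m. aa m i j * aa m k j) = (if i = k then 1 else 0)"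
proof -
  have mpos: "real m > 0" using m by simp
  have last: "aa m i (m - 1) * aa m k (m - 1) = 1 / real m"
  proof -
    have "sqrt (real m) * sqrt (real m) = real m" by simp
    then have "(1 / sqrt (real m)) * (1 / sqrt (real m)) = 1 / real m" by (metis times_divide_times_eq mult_1)
    then show ?thesis by (simp add: aa_def)
  qed
  have split: "(\<Sum>j<m. aa m i j * aa m k j) = (\<Sum>j<m - 1. aa m i j * aa m k j) + 1 / real m"
  proof -
    have "m = Suc (m - 1)" using m by simp
    then have "(\<Sum>j<m. aa m i j * aa m k j) = (\<Sum>j<Suc (m - 1). aa m i j * aa m k j)" by simp
    also have "\<dots> = (\<Sum>j<m - 1. aa m i j * aa m k j) + aa m i (m - 1) * aa m k (m - 1)"
      by (rule sum.lessThan_Suc)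
    finally show ?thesis using last by simp
  qed
  have low: "(\<Sum>j<i. aa m i j * aa m k j) = 1/(real m - real i) - 1 / real m" if "i \<le> m - 1"
  proof -
    have "(\<Sum>j<i. aa m i j * aa m k j) = (\<Sum>j<i. 1 / ((real m - real j) * (real m - real j - 1)))"
    proof (rule sum.cong)
      fix j assume "j \<in> {..<i}"
      then have j: "j < i" by simp
      have p: "(real m - real j) * (real m - real j - 1) > 0" using j that ik by auto
      show "aa m i j * aa m k j = 1 / ((real m - real j) * (real m - real j - 1))"
        using j that ik sq1[OF p] by (simp add: aa_def)
    qed simp
    also have "\<dots> = 1/(real m - real i) - 1 / real m" by (rule tele[OF that m])
    finally show ?thesis .
  qed
  show ?thesis
  proof (cases "i = m - 1")
    case True
    then have "k = m - 1" using ik by simp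
    have "(\<Sum>j<m - 1. aa m i j * aa m k j) = 1/(real m - real i) - 1 / real m"
      using low True by simp
    also have "real m - real i = 1" using True m by simp
    finally show ?thesis using split True \<open>k = m - 1\<close> by simp
  next
    case False
    then have im: "i < m - 1" using ik by simp
    have "(\<Sum>j<m - 1. aa m i j * aa m k j) = (\<Sum>j\<in>{0..<m - 1}. aa m i j * aa m k j)"
      by (simp add: atLeast0LessThan)
    also have "\<dots> = (\<Sum>j\<in>{0..<Suc i}. aa m i j * aa m k j) + (\<Sum>j\<in>{Suc i..<m - 1}. aa m i j * aa m k j)"
      using im by (intro sum.atLeastLessThan_concat[symmetric]) auto
    also have "(\<Sum>j\<in>{Suc i..<m - 1}. aa m i j * aa m k j) = 0"
      by (intro sum.neutral) (auto simp: aa_def)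
    also have "(\<Sum>j\<in>{0..<Suc i}. aa m i j * aa m k j) = (\<Sum>j<i. aa m i j * aa m k j) + aa m i i * aa m k i"
      by (simp add: atLeast0LessThan)
    finally have S: "(\<Sum>j<m - 1. aa m i j * aa m k j) = 1/(real m - real i) - 1 / real m + aa m i i * aa m k i"
      using low im by simp
    have a: "real m - real i > 0" "real m - real i - 1 > 0" using im by auto
    show ?thesis
    proof (cases "i = k")
      case True
      have "aa m i i * aa m k i = (real m - real i - 1) / (real m - real i)"
        using True im a by (simp add: aa_def)
      moreover have "1/(real m - real i) + (real m - real i - 1) / (real m - real i) = 1"
        using a by (simp add: divide_simps)
      ultimately show ?thesis using S split True by simp
    next
      case False
      have "aa m i i * aa m k i = - 1 / (real m - real i)"
        using False im a ik sq2[OF a(1) a(2)] by (simp add: aa_def)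
      then show ?thesis using S split False by simp
    qed
  qed
qed

lemma A_orth: assumes m: "2 \<le> m" shows "A_mat m * transpose_mat (A_mat m) = 1\<^sub>m m"
proof (rule eq_matI)
  fix i k assume i: "i < dim_row (1\<^sub>m m :: real mat)" and k: "k < dim_col (1\<^sub>m m :: real mat)"
  then have i: "i < m" and k: "k < m" by auto
  have "(A_mat m * transpose_mat (A_mat m)) $$ (i, k) = (\<Sum>j<m. aa m i j * aa m k j)"
  proof -
    have "(A_mat m * transpose_mat (A_mat m)) $$ (i, k) = row (A_mat m) i \<bullet> row (A_mat m) k"
      using i k A_mat_carrier[of m] by simp
    also have "\<dots> = (\<Sum>j\<in>{0..<m}. A_mat m $$ (i, j) * A_mat m $$ (k, j))"
      using i k A_mat_carrier[of m] by (simp add: scalar_prod_def)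
    also have "\<dots> = (\<Sum>j<m. aa m i j * aa m k j)"
      using i k by (simp add: A_entry atLeast0LessThan)
    finally show ?thesis .
  qed
  also have "\<dots> = (if i = k then 1 else 0)"
  proof (cases "i \<le> k")
    case True then show ?thesis using aa_sum[OF m True k] by simp
  next
    case False
    then have "(\<Sum>j<m. aa m i j * aa m k j) = (\<Sum>j<m. aa m k j * aa m i j)" by (simp add: mult.commute)
    then show ?thesis using aa_sum[OF m _ i, of k] False by simp
  qed
  finally show "(A_mat m * transpose_mat (A_mat m)) $$ (i, k) = 1\<^sub>m m $$ (i, k)" using i k by simp
qed (auto simp: A_mat_def)

lemma xi_carrier: "xi_vec k \<in> carrier_vec k" by (simp add: xi_vec_def)

lemma xi_self: assumes "k > 0" shows "xi_vec k \<bullet> xi_vec k = 1"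
proof -
  have "xi_vec k \<bullet> xi_vec k = (\<Sum>j\<in>{0..<k}. (1 / sqrt (real k)) * (1 / sqrt (real k)))"
    by (simp add: xi_vec_def scalar_prod_def)
  also have "(1 / sqrt (real k)) * (1 / sqrt (real k)) = 1 / real k"
  proof -
    have "sqrt (real k) * sqrt (real k) = real k" by simp
    then show ?thesis by (metis times_divide_times_eq mult_1)
  qed
  finally show ?thesis using assms by simp
qed

lemma sum_split_last: "1 \<le> (m::nat) \<Longrightarrow> (\<Sum>j\<in>{0..<m}. f j) = (\<Sum>j<m - 1. f j) + (f (m - 1) :: real)"
proof -
  assume "1 \<le> m"
  then have "m = Suc (m - 1)" by simp
  then have "(\<Sum>j\<in>{0..<m}. f j) = (\<Sum>j<Suc (m - 1). f j)" by (metis atLeast0LessThan)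
  then show ?thesis by simp
qed

lemma A_last_col: assumes "2 \<le> m" shows "A_mat m *\<^sub>v unit_vec m (m - 1) = xi_vec m"
  using assms by (intro eq_vecI) (auto simp: A_mat_carrier xi_vec_def A_mat_def)

lemma LQ_eq: assumes m: "2 \<le> m" and Q: "Q \<in> carrier_mat m n"
  and last: "transpose_mat Q *\<^sub>v unit_vec m (m - 1) = xi_vec n"
  shows "L_mat m * Q + (1 / sqrt (real m * real n)) \<cdot>\<^sub>m J_mat m n = A_mat m * Q"
proof (rule eq_matI)
  fix i l assume "i < dim_row (A_mat m * Q)" "l < dim_col (A_mat m * Q)"
  then have i: "i < m" and l: "l < n" using Q by (auto simp: A_mat_def)
  have ql: "Q $$ (m - 1, l) = 1 / sqrt (real n)"
  proof -
    have "(transpose_mat Q *\<^sub>v unit_vec m (m - 1)) $ l = xi_vec n $ l" using last by simp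
    then show ?thesis using Q l m by (simp add: xi_vec_def)
  qed
  have "(A_mat m * Q) $$ (i, l) = (\<Sum>j\<in>{0..<m}. A_mat m $$ (i, j) * Q $$ (j, l))"
    using i l Q by (simp add: A_mat_def scalar_prod_def)
  also have "\<dots> = (\<Sum>j<m - 1. A_mat m $$ (i, j) * Q $$ (j, l)) + A_mat m $$ (i, m - 1) * Q $$ (m - 1, l)"
    using m by (intro sum_split_last) simp
  also have "(\<Sum>j<m - 1. A_mat m $$ (i, j) * Q $$ (j, l)) = (\<Sum>j<m - 1. L_mat m $$ (i, j) * Q $$ (j, l))"
    using i by (intro sum.cong) (auto simp: A_entry L_entry)
  also have "A_mat m $$ (i, m - 1) * Q $$ (m - 1, l) = 1 / sqrt (real m * real n)"
    using i m ql by (simp add: A_mat_def real_sqrt_mult)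
  finally have 1: "(A_mat m * Q) $$ (i, l) = (\<Sum>j<m - 1. L_mat m $$ (i, j) * Q $$ (j, l)) + 1 / sqrt (real m * real n)" .
  have "(L_mat m * Q) $$ (i, l) = (\<Sum>j\<in>{0..<m}. L_mat m $$ (i, j) * Q $$ (j, l))"
    using i l Q by (simp add: L_mat_def scalar_prod_def)
  also have "\<dots> = (\<Sum>j<m - 1. L_mat m $$ (i, j) * Q $$ (j, l)) + L_mat m $$ (i, m - 1) * Q $$ (m - 1, l)"
    using m by (intro sum_split_last) simp
  finally have 2: "(L_mat m * Q) $$ (i, l) = (\<Sum>j<m - 1. L_mat m $$ (i, j) * Q $$ (j, l))"
    using L_entry_last[OF i] by simp
  show "(L_mat m * Q + (1 / sqrt (real m * real n)) \<cdot>\<^sub>m J_mat m n) $$ (i, l) = (A_mat m * Q) $$ (i, l)"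
    using 1 2 i l Q by (simp add: J_mat_def L_mat_def)
qed (use Q in \<open>auto simp: A_mat_def L_mat_def J_mat_def\<close>)

theorem theorem2:
  fixes m n :: nat
  assumes "2 \<le> m" and "m \<le> n"
  shows "O_tilde m n =
    {L_mat m * Q + (1 / sqrt (real m * real n)) \<cdot>\<^sub>m J_mat m n | Q.
       Q \<in> carrier_mat m n \<and> Q * transpose_mat Q = 1\<^sub>m m
       \<and> transpose_mat Q *\<^sub>v unit_vec m (m - 1) = xi_vec n}"
proof
  have m: "2 \<le> m" using assms by simp
  have n0: "n > 0" using assms by simp
  let ?A = "A_mat m"
  have A: "?A \<in> carrier_mat m m" by (rule A_mat_carrier)
  have AAT: "?A * transpose_mat ?A = 1\<^sub>m m" by (rule A_orth[OF m])
  have ATA: "transpose_mat ?A * ?A = 1\<^sub>m m"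
    by (rule mat_mult_left_right_inverse[OF A _ AAT]) (simp add: A_mat_def)
  have e: "unit_vec m (m - 1) \<in> carrier_vec m" by simp
  have Ae: "?A *\<^sub>v unit_vec m (m - 1) = xi_vec m" by (rule A_last_col[OF m])
  show "O_tilde m n \<subseteq> {L_mat m * Q + (1 / sqrt (real m * real n)) \<cdot>\<^sub>m J_mat m n | Q.
       Q \<in> carrier_mat m n \<and> Q * transpose_mat Q = 1\<^sub>m m
       \<and> transpose_mat Q *\<^sub>v unit_vec m (m - 1) = xi_vec n}"
  proof
    fix W assume "W \<in> O_tilde m n"
    then have W: "W \<in> carrier_mat m n" and WWT: "W * transpose_mat W = 1\<^sub>m m"
      and tr: "xi_vec m \<bullet> (W *\<^sub>v xi_vec n) = 1" by (auto simp: O_tilde_def)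
    define v where "v = transpose_mat W *\<^sub>v xi_vec m"
    have v: "v \<in> carrier_vec n" unfolding v_def by (rule mult_mat_vec_carrier[OF transpose_carrier_mat[THEN iffD2, OF W] xi_carrier])
    have vv: "v \<bullet> v = 1"
    proof -
      have "v \<bullet> v = xi_vec m \<bullet> (W *\<^sub>v v)"
        unfolding v_def by (rule transpose_vec_mult_scalar[OF W v[unfolded v_def] xi_carrier])
      also have "W *\<^sub>v v = (W * transpose_mat W) *\<^sub>v xi_vec m"
        unfolding v_def by (rule assoc_mult_mat_vec[OF W transpose_carrier_mat[THEN iffD2, OF W] xi_carrier, symmetric])
      also have "\<dots> = xi_vec m" unfolding WWT using xi_carrier by simp
      finally show ?thesis using xi_self[of m] m by simp
    qed
    have vy: "v \<bullet> xi_vec n = 1"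
      unfolding v_def using transpose_vec_mult_scalar[OF W xi_carrier xi_carrier] tr by (simp only:)
    have yy: "xi_vec n \<bullet> xi_vec n = 1" by (rule xi_self[OF n0])
    have vyeq: "v = xi_vec n"
    proof -
      let ?y = "xi_vec n"
      have "(\<Sum>l\<in>{0..<n}. (v $ l - ?y $ l)^2) = (\<Sum>l\<in>{0..<n}. v $ l * v $ l) - 2 * (\<Sum>l\<in>{0..<n}. v $ l * ?y $ l) + (\<Sum>l\<in>{0..<n}. ?y $ l * ?y $ l)"
      proof -
        have "(\<Sum>l\<in>{0..<n}. (v $ l - ?y $ l)^2) = (\<Sum>l\<in>{0..<n}. (v $ l * v $ l - 2 * (v $ l * ?y $ l)) + ?y $ l * ?y $ l)"
          by (intro sum.cong) (simp_all add: power2_eq_square algebra_simps)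
        also have "\<dots> = (\<Sum>l\<in>{0..<n}. v $ l * v $ l - 2 * (v $ l * ?y $ l)) + (\<Sum>l\<in>{0..<n}. ?y $ l * ?y $ l)"
          by (rule sum.distrib)
        also have "(\<Sum>l\<in>{0..<n}. v $ l * v $ l - 2 * (v $ l * ?y $ l)) = (\<Sum>l\<in>{0..<n}. v $ l * v $ l) - 2 * (\<Sum>l\<in>{0..<n}. v $ l * ?y $ l)"
          by (simp only: sum_subtractf sum_distrib_left)
        finally show ?thesis .
      qed
      also have "\<dots> = v \<bullet> v - 2 * (v \<bullet> ?y) + ?y \<bullet> ?y"
        using v by (simp add: scalar_prod_def xi_vec_def)
      also have "\<dots> = 0" using vv vy yy by simp
      finally have "(\<Sum>l\<in>{0..<n}. (v $ l - ?y $ l)^2) = 0" .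
      then have "\<forall>l\<in>{0..<n}. (v $ l - ?y $ l)^2 = 0"
        by (subst sum_nonneg_eq_0_iff[symmetric]) auto
      then show ?thesis using v by (intro eq_vecI) (auto simp: xi_vec_def)
    qed
    define Q where "Q = transpose_mat ?A * W"
    have Q: "Q \<in> carrier_mat m n" using W A by (simp add: Q_def)
    have QT: "transpose_mat Q = transpose_mat W * ?A"
      unfolding Q_def using W A by (simp add: transpose_mult)
    have QQT: "Q * transpose_mat Q = 1\<^sub>m m"
    proof -
      have At: "transpose_mat ?A \<in> carrier_mat m m" using A by simp
      have WT: "transpose_mat W \<in> carrier_mat n m" using W by simp
      have "Q * transpose_mat Q = (transpose_mat ?A * W) * (transpose_mat W * ?A)"
        by (simp only: QT) (simp add: Q_def)
      also have "\<dots> = transpose_mat ?A * (W * (transpose_mat W * ?A))"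
        by (rule assoc_mult_mat[OF At W mult_carrier_mat[OF WT A]])
      also have "W * (transpose_mat W * ?A) = (W * transpose_mat W) * ?A"
        by (rule assoc_mult_mat[OF W WT A, symmetric])
      also have "\<dots> = ?A" unfolding WWT using A by simp
      finally show ?thesis using ATA by simp
    qed
    have Qlast: "transpose_mat Q *\<^sub>v unit_vec m (m - 1) = xi_vec n"
    proof -
      have "transpose_mat Q *\<^sub>v unit_vec m (m - 1) = transpose_mat W *\<^sub>v (?A *\<^sub>v unit_vec m (m - 1))"
        unfolding QT using W A e by simp
      then show ?thesis using Ae vyeq v_def by simp
    qed
    have "W = ?A * Q"
    proof -
      have "?A * Q = (?A * transpose_mat ?A) * W" unfolding Q_def using A W by simp
      then show ?thesis unfolding AAT using W by simp
    qed
    then have "W = L_mat m * Q + (1 / sqrt (real m * real n)) \<cdot>\<^sub>m J_mat m n"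
      using LQ_eq[OF m Q Qlast] by simp
    then show "W \<in> {L_mat m * Q + (1 / sqrt (real m * real n)) \<cdot>\<^sub>m J_mat m n | Q.
       Q \<in> carrier_mat m n \<and> Q * transpose_mat Q = 1\<^sub>m m
       \<and> transpose_mat Q *\<^sub>v unit_vec m (m - 1) = xi_vec n}"
      using Q QQT Qlast by blast
  qed
  show "{L_mat m * Q + (1 / sqrt (real m * real n)) \<cdot>\<^sub>m J_mat m n | Q.
       Q \<in> carrier_mat m n \<and> Q * transpose_mat Q = 1\<^sub>m m
       \<and> transpose_mat Q *\<^sub>v unit_vec m (m - 1) = xi_vec n} \<subseteq> O_tilde m n"
  proof
    fix W assume "W \<in> {L_mat m * Q + (1 / sqrt (real m * real n)) \<cdot>\<^sub>m J_mat m n | Q.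
       Q \<in> carrier_mat m n \<and> Q * transpose_mat Q = 1\<^sub>m m
       \<and> transpose_mat Q *\<^sub>v unit_vec m (m - 1) = xi_vec n}"
    then obtain Q where Q: "Q \<in> carrier_mat m n" and QQT: "Q * transpose_mat Q = 1\<^sub>m m"
      and Qlast: "transpose_mat Q *\<^sub>v unit_vec m (m - 1) = xi_vec n"
      and Wd: "W = L_mat m * Q + (1 / sqrt (real m * real n)) \<cdot>\<^sub>m J_mat m n" by blast
    have WA: "W = ?A * Q" using Wd LQ_eq[OF m Q Qlast] by simp
    have Wc: "W \<in> carrier_mat m n" using WA A Q by simp
    have At: "transpose_mat ?A \<in> carrier_mat m m" using A by simp
    have QTc: "transpose_mat Q \<in> carrier_mat n m" using Q by simp
    have "W * transpose_mat W = (?A * Q) * (transpose_mat Q * transpose_mat ?A)"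
      unfolding WA using A Q by (simp add: transpose_mult)
    also have "\<dots> = ?A * (Q * (transpose_mat Q * transpose_mat ?A))"
      by (rule assoc_mult_mat[OF A Q mult_carrier_mat[OF QTc At]])
    also have "Q * (transpose_mat Q * transpose_mat ?A) = (Q * transpose_mat Q) * transpose_mat ?A"
      by (rule assoc_mult_mat[OF Q QTc At, symmetric])
    also have "\<dots> = transpose_mat ?A" unfolding QQT using At by simp
    finally have 1: "W * transpose_mat W = 1\<^sub>m m" using AAT by simp
    have Qy: "Q *\<^sub>v xi_vec n = unit_vec m (m - 1)"
    proof -
      have "Q *\<^sub>v xi_vec n = (Q * transpose_mat Q) *\<^sub>v unit_vec m (m - 1)"
        unfolding Qlast[symmetric] using Q e by simp
      then show ?thesis unfolding QQT using e by simp
    qed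
    have "W *\<^sub>v xi_vec n = xi_vec m"
      unfolding WA using A Q xi_carrier[of n] Qy Ae by simp
    then have 2: "xi_vec m \<bullet> (W *\<^sub>v xi_vec n) = 1" using xi_self[of m] m by simp
    show "W \<in> O_tilde m n" using Wc 1 2 by (simp add: O_tilde_def)
  qed
qed

end
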